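(* Let $S=\{f_1,\dots,f_n\}$ be a set of polynomials in $\mathbb{Q}[\alpha_1,\dots,\alpha_r]$ and let $\sigma$ be a permutation of $\{\alpha_1,\dots,\alpha_r\}$. If $S$ is reducible with respect to $\sigma$, then every subset $L\subseteq S$ is reducible with respect to $\sigma$.
   Context: "Irreducible factors" are taken over $\mathbb{Q}$ and polynomials differing by a nonzero constant are identified. A compatibility graph for a finite set $S$ of polynomials is a graph with vertex set $S$. Reduction step: given $(S,C)$ with $S=\{f_1,\dots,f_n\}$ and a variable $\alpha$, the step is undefined if some $f_i$ has degree $>1$ in $\alpha$; otherwise write $f_i=g_i\alpha+h_i$ with $g_i=\partial f_i/\partial\alpha$, $h_i=f_i|_{\alpha=0}$, let $S^4=\{g_i\}\cup\{h_i\}\cup\{g_ih_j-h_ig_j: i\neq j,\ f_if_j\in E(C)\}$ and let $S_{(\alpha)}$ be the set of irreducible factors of members of $S^4$. Its compatibility graph $C_{(\alpha)}$: attach to each $m\in S_{(\alpha)}$ the labels $\{0,i\}$ whenever $m\mid g_i$; $\{i,\infty\}$ whenever $m\mid h_i$, and also $\{0,i\}$ if $h_i=f_i$; $\{i,j\}$ whenever $m\mid g_ih_j-h_ig_j$ with $f_i,f_j$ compatible; $m,m'$ are adjacent iff some label of $m$ meets some label of $m'$. Let $S_{[\sigma(1)]}=S_{(\sigma(1))}$ computed from $(S,\text{complete graph})$, and for $k\ge 2$ let $S_{[\sigma(1),\dots,\sigma(k)]}=\bigcap_{i} S_{[\sigma(1),\dots,\widehat{\sigma(i)},\dots,\sigma(k)](\sigma(i))}$,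 the intersection over those $i\le k$ for which the step is defined (undefined if there are none), with compatibility graph whose edge set is the intersection of the corresponding edge sets. $S$ is reducible with respect to $\sigma$ if for all $1\le i\le r-1$ the set $S_{[\sigma(1),\dots,\sigma(i)]}$ is defined and all its members have degree $\le 1$ in $\sigma(i+1)$. *)

theory Defs
  imports Complex_Main "HOL-Library.Poly_Mapping" "HOL-Computational_Algebra.Factorial_Ring"
begin

text \<open>Multivariate polynomials over the rationals: variables are natural numbers
  (alpha_i is variable i), a monomial is a finitely supported exponent vector.\<close>
type_synonym mpoly = "(nat \<Rightarrow>\<^sub>0 nat) \<Rightarrow>\<^sub>0 rat"

definition mpoly_vars :: "mpoly \<Rightarrow> nat set" where
  "mpoly_vars p = (\<Union>m\<in>Poly_Mapping.keys p. Poly_Mapping.keys m)"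

definition deg_in :: "nat \<Rightarrow> mpoly \<Rightarrow> nat" where
  "deg_in a p = Max (insert 0 ((\<lambda>m. Poly_Mapping.lookup m a) ` Poly_Mapping.keys p))"

definition pderiv_var :: "nat \<Rightarrow> mpoly \<Rightarrow> mpoly" where
  "pderiv_var a p = (\<Sum>m\<in>Poly_Mapping.keys p.
      Poly_Mapping.single (m - Poly_Mapping.single a 1) (of_nat (Poly_Mapping.lookup m a) * Poly_Mapping.lookup p m))"

definition subst_zero :: "nat \<Rightarrow> mpoly \<Rightarrow> mpoly" where
  "subst_zero a p = (\<Sum>m\<in>{m\<in>Poly_Mapping.keys p. Poly_Mapping.lookup m a = 0}. Poly_Mapping.single m (Poly_Mapping.lookup p m))"

text \<open>Canonical representative of a polynomial modulo nonzero constants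
  (leading coefficient, w.r.t. the linear order on monomials, equal to 1).\<close>
definition normalize_mp :: "mpoly \<Rightarrow> mpoly" where
  "normalize_mp p = p * Poly_Mapping.single 0 (1 / Poly_Mapping.lookup p (Max (Poly_Mapping.keys p)))"

text \<open>Graphs on a set of polynomials are given by their (symmetric) edge relation.\<close>
type_synonym graph = "(mpoly \<times> mpoly) set"

definition complete_graph :: "mpoly set \<Rightarrow> graph" where
  "complete_graph S = {(f, f'). f \<in> S \<and> f' \<in> S \<and> f \<noteq> f'}"

text \<open>Irreducible factors (up to constants) of a polynomial q; a factor of q means
  an irreducible divisor of a nonzero q.\<close>
definition is_factor :: "mpoly \<Rightarrow> mpoly \<Rightarrow> bool" where
  "is_factor m q \<longleftrightarrow> q \<noteq> 0 \<and> m dvd q"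

datatype label_elem = LZero | LInf | LIdx mpoly

definition step_defined :: "mpoly set \<Rightarrow> nat \<Rightarrow> bool" where
  "step_defined S a \<longleftrightarrow> (\<forall>f\<in>S. deg_in a f \<le> 1)"

definition S4 :: "mpoly set \<Rightarrow> graph \<Rightarrow> nat \<Rightarrow> mpoly set" where
  "S4 S C a = pderiv_var a ` S \<union> subst_zero a ` S \<union>
     {pderiv_var a f * subst_zero a f' - subst_zero a f * pderiv_var a f' | f f'.
        f \<in> S \<and> f' \<in> S \<and> f \<noteq> f' \<and> (f, f') \<in> C}"

definition step_set :: "mpoly set \<Rightarrow> graph \<Rightarrow> nat \<Rightarrow> mpoly set" where
  "step_set S C a = {normalize_mp m | m. irreducible m \<and> (\<exists>q\<in>S4 S C a. is_factor m q)}"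

definition labels :: "mpoly set \<Rightarrow> graph \<Rightarrow> nat \<Rightarrow> mpoly \<Rightarrow> label_elem set set" where
  "labels S C a m =
     {{LZero, LIdx f} | f. f \<in> S \<and> is_factor m (pderiv_var a f)} \<union>
     {{LIdx f, LInf} | f. f \<in> S \<and> is_factor m (subst_zero a f)} \<union>
     {{LZero, LIdx f} | f. f \<in> S \<and> is_factor m (subst_zero a f) \<and> subst_zero a f = f} \<union>
     {{LIdx f, LIdx f'} | f f'. f \<in> S \<and> f' \<in> S \<and> f \<noteq> f' \<and> (f, f') \<in> C \<and>
        is_factor m (pderiv_var a f * subst_zero a f' - subst_zero a f * pderiv_var a f')}"

definition step_graph :: "mpoly set \<Rightarrow> graph \<Rightarrow> nat \<Rightarrow> graph" where
  "step_graph S C a = {(m, m'). m \<in> step_set S C a \<and> m' \<in> step_set S C a \<and> m \<noteq> m' \<and>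
      (\<exists>l\<in>labels S C a m. \<exists>l'\<in>labels S C a m'. l \<inter> l' \<noteq> {})}"

definition red_step :: "mpoly set \<times> graph \<Rightarrow> nat \<Rightarrow> (mpoly set \<times> graph) option" where
  "red_step SC a = (if step_defined (fst SC) a
      then Some (step_set (fst SC) (snd SC) a, step_graph (fst SC) (snd SC) a) else None)"

definition del_nth :: "nat \<Rightarrow> 'a list \<Rightarrow> 'a list" where
  "del_nth i xs = take i xs @ drop (Suc i) xs"

text \<open>iter_red S0 k xs, for length xs = k, is S_[xs] (with its graph), starting from
  (S0, complete graph).  For k = 1 the general rule gives S_(x1) from (S0, complete).\<close>
primrec iter_red :: "mpoly set \<Rightarrow> nat \<Rightarrow> nat list \<Rightarrow> (mpoly set \<times> graph) option" where
  "iter_red S0 0 xs = Some (S0, complete_graph S0)"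
| "iter_red S0 (Suc k) xs =
     (let R = {T | T i. i < length xs \<and>
                 Option.bind (iter_red S0 k (del_nth i xs)) (\<lambda>U. red_step U (xs ! i)) = Some T}
      in if R = {} then None else Some (\<Inter>(fst ` R), \<Inter>(snd ` R)))"

definition S_br :: "mpoly set \<Rightarrow> nat list \<Rightarrow> (mpoly set \<times> graph) option" where
  "S_br S xs = iter_red (normalize_mp ` S) (length xs) xs"

definition reducible_wrt :: "nat \<Rightarrow> (nat \<Rightarrow> nat) \<Rightarrow> mpoly set \<Rightarrow> bool" where
  "reducible_wrt r \<sigma> S \<longleftrightarrow>
     (\<forall>i. 1 \<le> i \<and> i \<le> r - 1 \<longrightarrow>
        (\<exists>T. S_br S (map \<sigma> [1..<i+1]) = Some T \<and> (\<forall>f\<in>fst T. deg_in (\<sigma> (i+1)) f \<le> 1)))"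

end

theory Submission
  imports Defs
begin

lemma S4_mono: "S' \<subseteq> S \<Longrightarrow> C' \<subseteq> C \<Longrightarrow> S4 S' C' a \<subseteq> S4 S C a"
  unfolding S4_def by blast

lemma step_set_mono: "S' \<subseteq> S \<Longrightarrow> C' \<subseteq> C \<Longrightarrow> step_set S' C' a \<subseteq> step_set S C a"
  unfolding step_set_def using S4_mono by blast

lemma labels_mono: "S' \<subseteq> S \<Longrightarrow> C' \<subseteq> C \<Longrightarrow> labels S' C' a m \<subseteq> labels S C a m"
  unfolding labels_def by blast

lemma step_graph_mono: "S' \<subseteq> S \<Longrightarrow> C' \<subseteq> C \<Longrightarrow> step_graph S' C' a \<subseteq> step_graph S C a"
proof -
  assume a: "S' \<subseteq> S" "C' \<subseteq> C"
  note ss = step_set_mono[OF a, of a] and ll = labels_mono[OF a, of a]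
  show ?thesis unfolding step_graph_def using ss ll by blast
qed

lemma red_step_mono:
  assumes "red_step U a = Some T" "fst U' \<subseteq> fst U" "snd U' \<subseteq> snd U"
  shows "\<exists>T'. red_step U' a = Some T' \<and> fst T' \<subseteq> fst T \<and> snd T' \<subseteq> snd T"
proof -
  have d: "step_defined (fst U) a" and T: "T = (step_set (fst U) (snd U) a, step_graph (fst U) (snd U) a)"
    using assms(1) unfolding red_step_def by (auto split: if_splits)
  have "step_defined (fst U') a" using d assms(2) unfolding step_defined_def by blast
  then show ?thesis unfolding red_step_def using T step_set_mono[OF assms(2,3)] step_graph_mono[OF assms(2,3)]
    by auto
qed

lemma iter_red_mono:
  assumes "S0' \<subseteq> S0"
  shows "iter_red S0 k xs = Some T \<Longrightarrow> \<exists>T'. iter_red S0' k xs = Some T' \<and> fst T' \<subseteq> fst T \<and> snd T' \<subseteq> snd T"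
proof (induction k arbitrary: xs T)
  case 0
  have "complete_graph S0' \<subseteq> complete_graph S0" using assms unfolding complete_graph_def by blast
  then show ?case using 0 assms by auto
next
  case (Suc k)
  define R where "R = {T | T i. i < length xs \<and>
                 Option.bind (iter_red S0 k (del_nth i xs)) (\<lambda>U. red_step U (xs ! i)) = Some T}"
  define R' where "R' = {T | T i. i < length xs \<and>
                 Option.bind (iter_red S0' k (del_nth i xs)) (\<lambda>U. red_step U (xs ! i)) = Some T}"
  have RS: "iter_red S0 (Suc k) xs = (if R = {} then None else Some (\<Inter>(fst ` R), \<Inter>(snd ` R)))"
    unfolding R_def by (simp add: Let_def)
  have RS': "iter_red S0' (Suc k) xs = (if R' = {} then None else Some (\<Inter>(fst ` R'), \<Inter>(snd ` R')))"
    unfolding R'_def by (simp add: Let_def)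
  have key: "\<exists>T'\<in>R'. fst T' \<subseteq> fst X \<and> snd T' \<subseteq> snd X" if "X \<in> R" for X
  proof -
    from that obtain i where i: "i < length xs"
      and b: "Option.bind (iter_red S0 k (del_nth i xs)) (\<lambda>U. red_step U (xs ! i)) = Some X"
      unfolding R_def by blast
    from b obtain U where U: "iter_red S0 k (del_nth i xs) = Some U" "red_step U (xs ! i) = Some X"
      by (cases "iter_red S0 k (del_nth i xs)") auto
    from Suc.IH[OF U(1)] obtain U' where U': "iter_red S0' k (del_nth i xs) = Some U'"
      "fst U' \<subseteq> fst U" "snd U' \<subseteq> snd U" by blast
    from red_step_mono[OF U(2) U'(2,3)] obtain T' where
      T': "red_step U' (xs ! i) = Some T'" "fst T' \<subseteq> fst X" "snd T' \<subseteq> snd X" by blast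
    have "T' \<in> R'" unfolding R'_def using i U'(1) T'(1) by auto
    then show ?thesis using T' by blast
  qed
  have ne: "R \<noteq> {}" and TT: "T = (\<Inter>(fst ` R), \<Inter>(snd ` R))"
    using Suc.prems RS by (auto split: if_splits)
  have ne': "R' \<noteq> {}" using ne key by blast
  have "\<Inter>(fst ` R') \<subseteq> \<Inter>(fst ` R)" using key by blast
  moreover have "\<Inter>(snd ` R') \<subseteq> \<Inter>(snd ` R)" using key by blast
  ultimately show ?case using RS' ne' TT by auto
qed

theorem mainTheorem4:
  fixes r :: nat and \<sigma> :: "nat \<Rightarrow> nat" and S L :: "mpoly set"
  assumes "finite S"
    and "\<forall>f\<in>S. mpoly_vars f \<subseteq> {1..r}"
    and "bij_betw \<sigma> {1..r} {1..r}"
    and "reducible_wrt r \<sigma> S"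
    and "L \<subseteq> S"
  shows "reducible_wrt r \<sigma> L"
  unfolding reducible_wrt_def
proof (intro allI impI)
  fix i assume i: "1 \<le> i \<and> i \<le> r - 1"
  from assms(4) i obtain T where T: "S_br S (map \<sigma> [1..<i+1]) = Some T"
    "\<forall>f\<in>fst T. deg_in (\<sigma> (i+1)) f \<le> 1" unfolding reducible_wrt_def by blast
  have sub: "normalize_mp ` L \<subseteq> normalize_mp ` S" using assms(5) by blast
  from iter_red_mono[OF sub, of _ _ T] T(1) obtain T' where
    "S_br L (map \<sigma> [1..<i+1]) = Some T'" "fst T' \<subseteq> fst T" unfolding S_br_def by blast
  then show "\<exists>T. S_br L (map \<sigma> [1..<i+1]) = Some T \<and> (\<forall>f\<in>fst T. deg_in (\<sigma> (i+1)) f \<le> 1)"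
    using T(2) by blast
qed

end
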